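(* Let $r>2$. Then \[\sum_{k_1,\dots,k_r=1}^K\hat I_K^{\pm}(k_1)\cdots\hat I_K^{\pm}(k_r)\,q^{-(k_1+\dots+k_r)/2}\sum_{\substack{m\mid\gcd(k_1,\dots,k_r)\\ mp\nmid\gcd(k_1,\dots,k_r)}}\pi(m)m^r=O(1),\] with the bound independent of $K$.
   Context: $q$ is a power of an odd prime $p$; $\pi(m)$ is the number of monic irreducible polynomials of degree $m$ in $\mathbb{F}_q[X]$. $\mathcal{I}=[-\beta/2,\beta/2]$, $0<\beta<1$. $e(x)=e^{2\pi ix}$. For $K\ge1$, $I_K^{\pm}(x)=\sum_{|k|\le K}\hat I_K^{\pm}(k)e(kx)$ are the Beurling–Selberg majorant/minorant trigonometric polynomials of degree $\le K$ of $\chi_{\mathcal{I}}$ (Montgomery, Ten Lectures, Ch. 1.2): $I_K^-\le\chi_{\mathcal{I}}\le I_K^+$, $\int I_K^{\pm}=|\mathcal{I}|\pm\frac1{K+1}$, even, and $|\hat I_K^{\pm}(k)-\hat\chi_{\mathcal{I}}(k)|\le\frac1{K+1}$. *)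

theory Defs
  imports "HOL-Analysis.Analysis" "HOL-Computational_Algebra.Polynomial"
begin

definition e :: "real \<Rightarrow> complex" where
  "e x = cis (2 * pi * x)"

text \<open>Indicator of the interval [-beta/2, beta/2], viewed on R/Z (1-periodic).\<close>
definition chiI :: "real \<Rightarrow> real \<Rightarrow> real" where
  "chiI \<beta> x = (if \<exists>j::int. \<bar>x - of_int j\<bar> \<le> \<beta> / 2 then 1 else 0)"

definition chi_hat :: "real \<Rightarrow> int \<Rightarrow> complex" where
  "chi_hat \<beta> k = integral {-\<beta>/2..\<beta>/2} (\<lambda>x. e (- (of_int k * x)))"

definition trig_poly :: "(int \<Rightarrow> complex) \<Rightarrow> nat \<Rightarrow> real \<Rightarrow> complex" where
  "trig_poly c K x = (\<Sum>k\<in>{- int K..int K}. c k * e (of_int k * x))"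

text \<open>Coefficients (Ih K k) of a family of Beurling--Selberg majorants (s = 1) or
  minorants (s = -1) of the indicator of the interval, with the properties listed
  in the context.\<close>
definition BS_coeffs :: "real \<Rightarrow> real \<Rightarrow> (nat \<Rightarrow> int \<Rightarrow> complex) \<Rightarrow> bool" where
  "BS_coeffs \<beta> s Ih \<longleftrightarrow>
     (\<forall>K\<ge>1.
        (\<forall>x. Im (trig_poly (Ih K) K x) = 0) \<and>
        (\<forall>x. s * (Re (trig_poly (Ih K) K x) - chiI \<beta> x) \<ge> 0) \<and>
        (\<forall>k. Ih K (- k) = Ih K k) \<and>
        integral {0..1} (trig_poly (Ih K) K) = complex_of_real (\<beta> + s / (real K + 1)) \<and>
        (\<forall>k. norm (Ih K k - chi_hat \<beta> k) \<le> 1 / (real K + 1)))"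

definition irr_count :: "'a::{field,finite} itself \<Rightarrow> nat \<Rightarrow> nat" where
  "irr_count _ m = card {f :: 'a poly. lead_coeff f = 1 \<and> irreducible f \<and> degree f = m}"

end

theory Submission
  imports Defs
begin
lemma irr_count_le: "irr_count TYPE('a::{field,finite}) m \<le> CARD('a) ^ m"
proof -
  let ?A = "{f :: 'a poly. lead_coeff f = 1 \<and> irreducible f \<and> degree f = m}"
  let ?B = "PiE {..<m} (\<lambda>_. UNIV :: 'a set)"
  have inj: "inj_on (\<lambda>f. restrict (coeff f) {..<m}) ?A"
  proof (rule inj_onI)
    fix f g assume f: "f \<in> ?A" and g: "g \<in> ?A" and eq: "restrict (coeff f) {..<m} = restrict (coeff g) {..<m}"
    from f have df: "degree f = m" "coeff f m = 1" by auto
    from g have dg: "degree g = m" "coeff g m = 1" by auto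
    show "f = g"
    proof (rule poly_eqI)
      fix i
      consider "i < m" | "i = m" | "i > m" by linarith
      then show "coeff f i = coeff g i"
      proof cases
        case 1
        have "restrict (coeff f) {..<m} i = restrict (coeff g) {..<m} i" using eq by simp
        then show ?thesis using 1 by (simp add: restrict_def)
      next
        case 2 then show ?thesis using df dg by simp
      next
        case 3 then show ?thesis using df dg by (simp add: coeff_eq_0)
      qed
    qed
  qed
  have fin: "finite ?B" by (simp add: finite_PiE)
  have sub: "(\<lambda>f. restrict (coeff f) {..<m}) ` ?A \<subseteq> ?B" by (intro image_subsetI restrict_PiE) simp
  have "card ?A \<le> card ?B"
    by (rule card_inj_on_le[OF inj sub fin])
  also have "card ?B = CARD('a) ^ m" by (simp add: card_PiE)
  finally show ?thesis unfolding irr_count_def .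
qed
lemma chi_hat_bound: assumes "0 < \<beta>" shows "norm (chi_hat \<beta> k) \<le> \<beta>"
proof -
  have "norm (chi_hat \<beta> k) \<le> 1 * (\<beta>/2 - (-\<beta>/2))"
    unfolding chi_hat_def
  proof (rule integral_bound)
    show "continuous_on {- \<beta> / 2..\<beta> / 2} (\<lambda>x. e (- (of_int k * x)))"
      unfolding e_def by (intro continuous_intros)
  qed (use assms in \<open>auto simp: e_def\<close>)
  then show ?thesis by simp
qed
lemma summable_sq_pow:
  fixes z :: real assumes "0 < z" "z < 1"
  shows "summable (\<lambda>j. real j ^ 2 * z ^ (4 * j))"
proof -
  have lim: "(\<lambda>n. of_nat n * z ^ n) \<longlonglongrightarrow> 0"
    using assms by (intro powser_times_n_limit_0) simp
  then obtain N where N: "\<And>n. n \<ge> N \<Longrightarrow> norm (real n * z ^ n - 0) < 1"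
    using LIMSEQ_D[OF lim, of 1] by auto
  show ?thesis
  proof (rule summable_comparison_test')
    show "summable (\<lambda>n. (z^2) ^ n)" using assms by (intro summable_geometric) (simp add: power_less_one_iff abs_less_iff)
  next
    fix n assume "n \<ge> N"
    then have h: "real n * z ^ n < 1" "0 \<le> real n * z ^ n" using N[of n] assms by auto
    have "z ^ (4 * n) = (z^n)^2 * (z^2)^n"
    proof -
      have "4*n = n*2 + 2*n" by simp
      then show ?thesis by (metis power_add power_mult)
    qed
    then have "real n ^ 2 * z ^ (4 * n) = (real n * z ^ n)^2 * (z^2)^n"
      by (simp add: power_mult_distrib)
    also have "\<dots> \<le> 1 * (z^2)^n"
      using h assms by (intro mult_right_mono) (auto simp: power_le_one)
    finally show "norm (real n ^ 2 * z ^ (4 * n)) \<le> (z^2)^n" using assms by simp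
  qed
qed


lemma term_bound:
  fixes q r g :: nat and k :: "nat \<Rightarrow> nat"
  assumes q: "q \<ge> 3" and r: "r \<ge> 3" and k1: "\<And>i. i < r \<Longrightarrow> k i \<ge> 1"
    and gd: "\<And>i. i < r \<Longrightarrow> g dvd k i" and g1: "g \<ge> 1"
  shows "real q powr (- real (\<Sum>i<r. k i) / 2) * real (g^(r+1) * q^g)
         \<le> (\<Prod>i<r. real (k i)^2 * (real q powr (-1/24))^(4 * k i))"
proof -
  define S where "S = (\<Sum>i<r. k i)"
  have gk: "g \<le> k i" if "i < r" for i using gd[OF that] k1[OF that] by (intro dvd_imp_le) auto
  have "(\<Sum>i<r. g) \<le> S" unfolding S_def by (intro sum_mono gk) auto
  then have rgS: "r * g \<le> S" by simp
  have 3: "3 * g \<le> S" using rgS r by (meson le_trans mult_le_mono1)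
  have qpos: "real q > 0" "real q \<ge> 1" using q by auto
  have "real q powr (- real S / 2) * real q ^ g = real q powr (real g - real S / 2)"
  proof -
    have "real q powr (real g - real S / 2) = real q powr (- real S / 2 + real g)" by (simp add: algebra_simps)
    also have "\<dots> = real q powr (- real S / 2) * real q powr real g" by (rule powr_add)
    finally show ?thesis using qpos by (simp add: powr_realpow)
  qed
  also have "\<dots> \<le> real q powr (- real S / 6)"
    using 3 qpos by (intro powr_mono) auto
  also have "\<dots> = (\<Prod>i<r. (real q powr (-1/24))^(4 * k i))"
  proof -
    have "(real q powr (-1/24))^(4 * k i) = real q powr (- real (k i) / 6)" for i
      using qpos by (simp add: powr_realpow[symmetric] powr_powr)
    then have "(\<Prod>i<r. (real q powr (-1/24))^(4 * k i)) = (\<Prod>i<r. real q powr (- real (k i) / 6))"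
      by simp
    also have "\<dots> = real q powr (\<Sum>i<r. - real (k i) / 6)"
      using qpos by (simp add: powr_sum)
    also have "(\<Sum>i<r. - real (k i) / 6) = - real S / 6"
      unfolding S_def by (simp add: sum_negf sum_divide_distrib)
    finally show ?thesis by simp
  qed
  finally have A: "real q powr (- real S / 2) * real q ^ g \<le> (\<Prod>i<r. (real q powr (-1/24))^(4 * k i))" .
  have "g ^ r = (\<Prod>i<r. g)" by simp
  also have "\<dots> \<le> (\<Prod>i<r. k i)" by (intro prod_mono) (auto intro: gk)
  finally have B1: "g ^ r \<le> (\<Prod>i<r. k i)" .
  have "0 < r" using r by simp
  have ppos: "(\<Prod>i<r. k i) > 0" using k1 by (intro prod_pos) (auto simp: Suc_le_eq)
  have "k 0 dvd (\<Prod>i<r. k i)" using \<open>0 < r\<close> by (intro dvd_prodI) auto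
  then have "k 0 \<le> (\<Prod>i<r. k i)" using ppos by (intro dvd_imp_le) auto
  then have B2: "g \<le> (\<Prod>i<r. k i)" using gk[OF \<open>0 < r\<close>] by simp
  have "g^(r+1) = g * g^r" by simp
  also have "\<dots> \<le> (\<Prod>i<r. k i) * (\<Prod>i<r. k i)" using B1 B2 by (intro mult_le_mono)
  also have "\<dots> = (\<Prod>i<r. k i ^ 2)" unfolding power2_eq_square by (rule prod.distrib[symmetric])
  finally have B0: "g^(r+1) \<le> (\<Prod>i<r. k i ^ 2)" .
  have B: "real (g^(r+1)) \<le> (\<Prod>i<r. real (k i)^2)"
    using B0 by (simp only: of_nat_prod[symmetric] of_nat_power[symmetric] of_nat_le_iff)
  have "real q powr (- real S / 2) * real (g^(r+1) * q^g)
        = (real q powr (- real S / 2) * real q ^ g) * real (g^(r+1))" by simp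
  also have "\<dots> \<le> (\<Prod>i<r. (real q powr (-1/24))^(4 * k i)) * (\<Prod>i<r. real (k i)^2)"
    using A B by (intro mult_mono) (auto intro: prod_nonneg)
  also have "\<dots> = (\<Prod>i<r. real (k i)^2 * (real q powr (-1/24))^(4 * k i))"
    by (simp add: prod.distrib mult.commute)
  finally show ?thesis unfolding S_def .
qed
theorem lemma9p3:
  fixes p n q r :: nat and \<beta> s :: real and Ih :: "nat \<Rightarrow> int \<Rightarrow> complex"
  assumes "prime p" and "odd p" and "n \<ge> 1" and "q = p ^ n"
    and "CARD('a::{field,finite}) = q"
    and "0 < \<beta>" and "\<beta> < 1"
    and "s \<in> {1, -1}" and "BS_coeffs \<beta> s Ih"
    and "r > 2"
  shows "\<exists>C. \<forall>K\<ge>1.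
    norm (\<Sum>k\<in>PiE {..<r} (\<lambda>_. {1..K}).
            (\<Prod>i<r. Ih K (int (k i)))
          * complex_of_real (real q powr (- real (\<Sum>i<r. k i) / 2))
          * of_nat (\<Sum>m\<in>{m. m dvd Gcd (k ` {..<r}) \<and> \<not> (m * p) dvd Gcd (k ` {..<r})}.
                      irr_count TYPE('a) m * m ^ r)) \<le> C"
proof -
  have p2: "p \<ge> 2" using assms(1) prime_ge_2_nat by blast
  have p3: "p \<ge> 3" using p2 assms(2) by (cases "p = 2") auto
  have "p \<le> p ^ n" using p2 assms(3) by (simp add: self_le_power)
  then have q3: "q \<ge> 3" using p3 assms(4) by simp
  have r3: "r \<ge> 3" using assms(10) by simp
  define z where "z = real q powr (-1/24)"
  have z0: "0 < z" using q3 unfolding z_def by simp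
  have z1: "z < 1" unfolding z_def using q3 by (intro powr_less_one) auto
  define f where "f j = real j ^ 2 * z ^ (4 * j)" for j :: nat
  have fnn: "f j \<ge> 0" for j unfolding f_def using z0 by simp
  have summ: "summable f" unfolding f_def by (rule summable_sq_pow[OF z0 z1])
  define M where "M = suminf f"
  have fK: "(\<Sum>j\<in>{1..K}. f j) \<le> M" for K
    unfolding M_def by (rule sum_le_suminf[OF summ]) (auto simp: fnn)
  have Ihb: "norm (Ih K j) \<le> 2" if "K \<ge> 1" for K j
  proof -
    have "norm (Ih K j - chi_hat \<beta> j) \<le> 1 / (real K + 1)"
      using assms(9) that unfolding BS_coeffs_def by blast
    also have "\<dots> \<le> 1" by (simp add: field_simps)
    finally have a: "norm (Ih K j - chi_hat \<beta> j) \<le> 1" .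
    have b: "norm (chi_hat \<beta> j) \<le> 1" using chi_hat_bound[OF assms(6), of j] assms(7) by simp
    have "norm (Ih K j) \<le> norm (Ih K j - chi_hat \<beta> j) + norm (chi_hat \<beta> j)"
      using norm_triangle_ineq[of "Ih K j - chi_hat \<beta> j" "chi_hat \<beta> j"] by simp
    then show ?thesis using a b by simp
  qed
  show ?thesis
  proof (intro exI allI impI)
    fix K :: nat assume K: "K \<ge> 1"
    let ?P = "PiE {..<r} (\<lambda>_. {1..K})"
    let ?T = "\<lambda>k. (\<Prod>i<r. Ih K (int (k i)))
          * complex_of_real (real q powr (- real (\<Sum>i<r. k i) / 2))
          * of_nat (\<Sum>m\<in>{m. m dvd Gcd (k ` {..<r}) \<and> \<not> (m * p) dvd Gcd (k ` {..<r})}.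
                      irr_count TYPE('a) m * m ^ r)"
    have Tb: "norm (?T k) \<le> 2 ^ r * (\<Prod>i<r. f (k i))" if k: "k \<in> ?P" for k
    proof -
      define g where "g = Gcd (k ` {..<r})"
      have k1: "k i \<ge> 1" if "i < r" for i using k that by (auto simp: PiE_def Pi_def)
      have gd: "g dvd k i" if "i < r" for i unfolding g_def using that by (intro Gcd_dvd) auto
      have "g \<noteq> 0" using gd[of 0] k1[of 0] r3 by (auto intro: Nat.gr0I)
      then have g1: "g \<ge> 1" by simp
      let ?X = "{m. m dvd g \<and> \<not> (m * p) dvd g}"
      have X: "?X \<subseteq> {1..g}" using g1 by (auto intro: dvd_imp_le dest: gr0I)
      have "(\<Sum>m\<in>?X. irr_count TYPE('a) m * m ^ r) \<le> (\<Sum>m\<in>{1..g}. irr_count TYPE('a) m * m ^ r)"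
        using X by (intro sum_mono2) auto
      also have "\<dots> \<le> (\<Sum>m\<in>{1..g}. q ^ g * g ^ r)"
      proof (intro sum_mono mult_le_mono)
        fix m assume m: "m \<in> {1..g}"
        have "irr_count TYPE('a) m \<le> q ^ m" using irr_count_le[where 'a='a, of m] assms(5) by simp
        also have "\<dots> \<le> q ^ g" using m q3 by (intro power_increasing) auto
        finally show "irr_count TYPE('a) m \<le> q ^ g" .
        show "m ^ r \<le> g ^ r" using m by (intro power_mono) auto
      qed
      also have "\<dots> = g ^ (r + 1) * q ^ g" by simp
      finally have N: "(\<Sum>m\<in>?X. irr_count TYPE('a) m * m ^ r) \<le> g ^ (r + 1) * q ^ g" .
      have pb: "norm (\<Prod>i<r. Ih K (int (k i))) \<le> 2 ^ r"
      proof -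
        have "norm (\<Prod>i<r. Ih K (int (k i))) \<le> (\<Prod>i<r. norm (Ih K (int (k i))))"
          by (rule norm_prod_le)
        also have "\<dots> \<le> (\<Prod>i<r. 2)" by (intro prod_mono) (auto intro: Ihb[OF K])
        finally show ?thesis by simp
      qed
      have tb: "real q powr (- real (\<Sum>i<r. k i) / 2) * real (g^(r+1) * q^g) \<le> (\<Prod>i<r. f (k i))"
        unfolding f_def z_def by (rule term_bound[OF q3 r3 k1 gd g1])
      have "norm (?T k) = norm (\<Prod>i<r. Ih K (int (k i))) * (real q powr (- real (\<Sum>i<r. k i) / 2)
             * real (\<Sum>m\<in>?X. irr_count TYPE('a) m * m ^ r))"
        unfolding g_def norm_mult norm_of_nat norm_of_real by (simp add: mult.assoc)
      also have "\<dots> \<le> 2 ^ r * (real q powr (- real (\<Sum>i<r. k i) / 2) * real (g^(r+1) * q^g))"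
      proof (rule mult_mono[OF pb])
        have NR: "real (\<Sum>m\<in>?X. irr_count TYPE('a) m * m ^ r) \<le> real (g^(r+1) * q^g)"
          using N by (simp only: of_nat_le_iff)
        show "real q powr (- real (\<Sum>i<r. k i) / 2) * real (\<Sum>m\<in>?X. irr_count TYPE('a) m * m ^ r)
            \<le> real q powr (- real (\<Sum>i<r. k i) / 2) * real (g^(r+1) * q^g)"
          by (rule mult_left_mono[OF NR]) simp
        show "0 \<le> real q powr (- real (\<Sum>i<r. k i) / 2) * real (\<Sum>m\<in>?X. irr_count TYPE('a) m * m ^ r)"
          by (intro mult_nonneg_nonneg) (simp_all only: powr_ge_zero of_nat_0_le_iff)
      qed simp
      also have "\<dots> \<le> 2 ^ r * (\<Prod>i<r. f (k i))"
        using tb by (intro mult_left_mono) auto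
      finally show ?thesis .
    qed
    have "norm (\<Sum>k\<in>?P. ?T k) \<le> (\<Sum>k\<in>?P. norm (?T k))" by (rule norm_sum)
    also have "\<dots> \<le> (\<Sum>k\<in>?P. 2 ^ r * (\<Prod>i<r. f (k i)))" by (intro sum_mono Tb)
    also have "\<dots> = 2 ^ r * (\<Sum>k\<in>?P. \<Prod>i<r. f (k i))"
      by (simp only: sum_distrib_left)
    also have "\<dots> = 2 ^ r * (\<Prod>i<r. \<Sum>j\<in>{1..K}. f j)"
    proof -
      have "(\<Sum>k\<in>?P. \<Prod>i<r. f (k i)) = (\<Prod>i<r. \<Sum>j\<in>{1..K}. f j)"
        by (rule prod_sum_PiE[symmetric]) auto
      then show ?thesis by (simp only:)
    qed
    also have "\<dots> \<le> 2 ^ r * (\<Prod>i<r. M)"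
      using fK[of K] by (intro mult_left_mono prod_mono) (auto intro: sum_nonneg fnn)
    also have "\<dots> = 2 ^ r * M ^ r" by simp
    finally show "norm (\<Sum>k\<in>?P. ?T k) \<le> 2 ^ r * M ^ r" .
  qed
qed

end
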